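(* Let $(X,\mathcal{F})$ be a measurable lamination admitting a regular foliated measurable atlas, and let $h:T\to T'$ be a measurable holonomy map between transversals. Then there exists a measurable homotopy $H:T\times\mathbb{R}\to X$ such that $H(t,0)=t$ and $H(t,1)=h(t)$ for all $t\in T$.
   Context: Measurable lamination: an MT-space (set with $\sigma$-algebra and topology) covered by countably many measurable open sets with MT-isomorphisms onto $B\times T$, $B$ an open ball in $\mathbb{R}^n$, $T$ standard Borel (product of Euclidean and discrete topologies, product $\sigma$-algebra); leaves are connected components. A foliated measurable atlas is regular if each chart $(U,\varphi)$ is the restriction of a chart $(W,\psi)$ with $\overline U\subset W$ and plaques of $U$ having compact closure, and each plaque of a chart meets at most one plaque of any other chart. A transversal is a measurable set meeting each leaf countably; a measurable holonomy map is a measurable isomorphism $h:T\to T'$ between transversals with $h(t)$ in the leaf of $t$. A measurable homotopy $T\times\mathbb{R}\to X$ is an MT-map (measurable, continuous) where $T\times\mathbb{R}$ has the topology of $\mathbb{R}$ on each $\{t\}\times\mathbb{R}$ and $T$ discrete. *)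

theory Defs
  imports "HOL-Analysis.Analysis" "HOL-Probability.Probability"
begin

definition MT_space :: "'a measure \<Rightarrow> 'a topology \<Rightarrow> bool" where
  "MT_space M Top \<longleftrightarrow> space M = topspace Top"

definition standard_borel :: "'b measure \<Rightarrow> bool" where
  "standard_borel T \<longleftrightarrow> (\<exists>\<tau>. topspace \<tau> = space T \<and> completely_metrizable_space \<tau>
       \<and> separable_space \<tau> \<and> sets T = sigma_sets (space T) {U. openin \<tau> U})"

definition model_topology :: "'e::euclidean_space set \<Rightarrow> 'b measure \<Rightarrow> ('e \<times> 'b) topology" where
  "model_topology B T = prod_topology (top_of_set B) (discrete_topology (space T))"

definition model_measure :: "'e::euclidean_space set \<Rightarrow> 'b measure \<Rightarrow> ('e \<times> 'b) measure" where
  "model_measure B T = restrict_space borel B \<Otimes>\<^sub>M T"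

definition fol_chart ::
  "'a measure \<Rightarrow> 'a topology \<Rightarrow> 'a set \<Rightarrow> ('a \<Rightarrow> 'e::euclidean_space \<times> 'b) \<Rightarrow> 'e set \<Rightarrow> 'b measure \<Rightarrow> bool" where
  "fol_chart M Top U \<phi> B T \<longleftrightarrow>
     U \<in> sets M \<and> openin Top U \<and>
     (\<exists>c r. r > 0 \<and> B = ball c r) \<and> standard_borel T \<and>
     bij_betw \<phi> U (B \<times> space T) \<and>
     \<phi> \<in> measurable (restrict_space M U) (model_measure B T) \<and>
     the_inv_into U \<phi> \<in> measurable (model_measure B T) (restrict_space M U) \<and>
     homeomorphic_map (subtopology Top U) (model_topology B T) \<phi>"

type_synonym ('a, 'e, 'b) chart = "'a set \<times> ('a \<Rightarrow> 'e \<times> 'b) \<times> 'e set \<times> 'b measure"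

definition is_chart :: "'a measure \<Rightarrow> 'a topology \<Rightarrow> ('a, 'e::euclidean_space, 'b) chart \<Rightarrow> bool" where
  "is_chart M Top c \<longleftrightarrow> (case c of (U, \<phi>, B, T) \<Rightarrow> fol_chart M Top U \<phi> B T)"

definition fol_atlas :: "'a measure \<Rightarrow> 'a topology \<Rightarrow> ('a, 'e::euclidean_space, 'b) chart set \<Rightarrow> bool" where
  "fol_atlas M Top A \<longleftrightarrow> (\<forall>c\<in>A. is_chart M Top c) \<and> (\<Union>c\<in>A. fst c) = space M"

text \<open>Measurable lamination of leaf dimension DIM('e): an MT-space covered by
  countably many foliated measurable charts.\<close>
definition measurable_lamination ::
  "'a measure \<Rightarrow> 'a topology \<Rightarrow> ('e::euclidean_space \<times> 'b) itself \<Rightarrow> bool" where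
  "measurable_lamination M Top _ \<longleftrightarrow> MT_space M Top \<and>
     (\<exists>A :: ('a, 'e, 'b) chart set. countable A \<and> fol_atlas M Top A)"

definition plaques :: "('a, 'e, 'b) chart \<Rightarrow> 'a set set" where
  "plaques c = (case c of (U, \<phi>, B, T) \<Rightarrow> (\<lambda>t. {x\<in>U. snd (\<phi> x) = t}) ` space T)"

definition regular_atlas :: "'a measure \<Rightarrow> 'a topology \<Rightarrow> ('a, 'e::euclidean_space, 'b) chart set \<Rightarrow> bool" where
  "regular_atlas M Top A \<longleftrightarrow> fol_atlas M Top A \<and>
     (\<forall>c\<in>A. (\<exists>W \<psi> B' T'. fol_chart M Top W \<psi> B' T' \<and>
                 fst c \<subseteq> W \<and> Top closure_of (fst c) \<subseteq> W \<and>
                 (\<forall>x\<in>fst c. fst (snd c) x = \<psi> x)) \<and>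
             (\<forall>P\<in>plaques c. compactin Top (Top closure_of P))) \<and>
     (\<forall>c\<in>A. \<forall>c'\<in>A. c \<noteq> c' \<longrightarrow> (\<forall>P\<in>plaques c. card {Q\<in>plaques c'. P \<inter> Q \<noteq> {}} \<le> 1
                                       \<and> finite {Q\<in>plaques c'. P \<inter> Q \<noteq> {}}))"

text \<open>Leaves are the connected components; a transversal is a measurable set
  meeting each leaf in a countable set.\<close>
definition transversal :: "'a measure \<Rightarrow> 'a topology \<Rightarrow> 'a set \<Rightarrow> bool" where
  "transversal M Top S \<longleftrightarrow> S \<in> sets M \<and>
     (\<forall>x\<in>topspace Top. countable (S \<inter> connected_component_of_set Top x))"

definition measurable_holonomy_map ::
  "'a measure \<Rightarrow> 'a topology \<Rightarrow> 'a set \<Rightarrow> 'a set \<Rightarrow> ('a \<Rightarrow> 'a) \<Rightarrow> bool" where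
  "measurable_holonomy_map M Top S S' h \<longleftrightarrow>
     transversal M Top S \<and> transversal M Top S' \<and> bij_betw h S S' \<and>
     h \<in> measurable (restrict_space M S) (restrict_space M S') \<and>
     the_inv_into S h \<in> measurable (restrict_space M S') (restrict_space M S) \<and>
     (\<forall>t\<in>S. h t \<in> connected_component_of_set Top t)"

definition measurable_homotopy ::
  "'a measure \<Rightarrow> 'a topology \<Rightarrow> 'a set \<Rightarrow> ('a \<times> real \<Rightarrow> 'a) \<Rightarrow> bool" where
  "measurable_homotopy M Top S H \<longleftrightarrow>
     H \<in> measurable (restrict_space M S \<Otimes>\<^sub>M borel) M \<and>
     continuous_map (prod_topology (discrete_topology S) euclideanreal) Top H"

end

theory Submission
  imports Defs
begin


definition cU :: "('a, 'e::euclidean_space, 'b) chart \<Rightarrow> 'a set" where "cU c = fst c"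
definition cphi :: "('a, 'e::euclidean_space, 'b) chart \<Rightarrow> 'a \<Rightarrow> 'e \<times> 'b" where "cphi c = fst (snd c)"
definition cB :: "('a, 'e::euclidean_space, 'b) chart \<Rightarrow> 'e set" where "cB c = fst (snd (snd c))"
definition cT :: "('a, 'e::euclidean_space, 'b) chart \<Rightarrow> 'b measure" where "cT c = snd (snd (snd c))"

definition cinv :: "('a, 'e::euclidean_space, 'b) chart \<Rightarrow> 'e \<times> 'b \<Rightarrow> 'a" where
  "cinv c = the_inv_into (cU c) (cphi c)"
definition coord :: "('a, 'e::euclidean_space, 'b) chart \<Rightarrow> 'a \<Rightarrow> 'e \<times> 'b" where
  "coord c x = (if x \<in> cU c then cphi c x else cphi c (SOME u. u \<in> cU c))"

definition goodc where "goodc M Top c \<longleftrightarrow> is_chart M Top c \<and> cU c \<noteq> {}"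

lemma goodc_fol: "goodc M Top c \<Longrightarrow> fol_chart M Top (cU c) (cphi c) (cB c) (cT c)"
  unfolding goodc_def is_chart_def cU_def cphi_def cB_def cT_def by (auto split: prod.splits)

lemma goodc_ne: "goodc M Top c \<Longrightarrow> cU c \<noteq> {}" unfolding goodc_def by auto

lemma goodc_bij: "goodc M Top c \<Longrightarrow> bij_betw (cphi c) (cU c) (cB c \<times> space (cT c))"
  using goodc_fol[unfolded fol_chart_def] by blast

lemma goodc_phi_in: "goodc M Top c \<Longrightarrow> x \<in> cU c \<Longrightarrow> cphi c x \<in> cB c \<times> space (cT c)"
  using goodc_bij bij_betwE by blast

lemma coord_in: "goodc M Top c \<Longrightarrow> coord c x \<in> cB c \<times> space (cT c)"
  unfolding coord_def using goodc_phi_in goodc_ne by (metis some_in_eq)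

lemma coord_eq: "x \<in> cU c \<Longrightarrow> coord c x = cphi c x" unfolding coord_def by simp

lemma cinv_in: "goodc M Top c \<Longrightarrow> p \<in> cB c \<times> space (cT c) \<Longrightarrow> cinv c p \<in> cU c \<and> cphi c (cinv c p) = p"
  unfolding cinv_def using goodc_bij
  by (metis bij_betw_def f_the_inv_into_f image_iff the_inv_into_into subset_refl)

lemma cinv_phi: "goodc M Top c \<Longrightarrow> x \<in> cU c \<Longrightarrow> cinv c (cphi c x) = x"
  unfolding cinv_def using goodc_bij by (metis bij_betw_def the_inv_into_f_f)


lemma goodc_U_sets: "goodc M Top c \<Longrightarrow> cU c \<in> sets M"
  using goodc_fol[unfolded fol_chart_def] by blast

lemma goodc_convex: assumes "goodc M Top c" shows "convex (cB c)"
  using goodc_fol[OF assms, unfolded fol_chart_def] by (auto intro: convex_ball)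

lemma space_model: "space (model_measure B T) = B \<times> space T"
  unfolding model_measure_def by (simp add: space_pair_measure space_restrict_space)

lemma coord_meas: assumes "goodc M Top c"
  shows "coord c \<in> measurable M (model_measure (cB c) (cT c))"
proof -
  have phi: "cphi c \<in> measurable (restrict_space M (cU c)) (model_measure (cB c) (cT c))"
    using goodc_fol[OF assms, unfolded fol_chart_def] by blast
  obtain u where u: "u \<in> cU c" using goodc_ne[OF assms] by blast
  have s: "{x\<in>space M. x \<in> cU c} \<in> sets M" using goodc_U_sets[OF assms]
  proof -
    have "{x\<in>space M. x \<in> cU c} = cU c" using sets.sets_into_space[OF goodc_U_sets[OF assms]] by auto
    then show ?thesis using goodc_U_sets[OF assms] by simp
  qed
  have eq: "coord c = (\<lambda>x. if x \<in> cU c then cphi c x else cphi c (SOME u. u \<in> cU c))"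
    unfolding coord_def by auto
  show ?thesis unfolding eq
    apply (subst measurable_If_restrict_space_iff[OF s])
    apply (intro conjI)
    using phi apply simp
    apply (rule measurable_const)
    unfolding space_model using goodc_phi_in[OF assms, of "SOME u. u \<in> cU c"] someI[of "\<lambda>u. u \<in> cU c", OF u] by simp
qed

lemma cinv_meas: assumes "goodc M Top c"
  shows "cinv c \<in> measurable (model_measure (cB c) (cT c)) M"
proof -
  have "cinv c \<in> measurable (model_measure (cB c) (cT c)) (restrict_space M (cU c))"
    using goodc_fol[OF assms, unfolded fol_chart_def] unfolding cinv_def by blast
  then show ?thesis by (simp add: measurable_restrict_space2_iff)
qed

definition lam :: "real \<Rightarrow> real" where "lam r = max 0 (min 1 r)"

lemma lam_01: "0 \<le> lam r" "lam r \<le> 1" unfolding lam_def by auto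

lemma lam_meas: "lam \<in> borel_measurable borel"
  unfolding lam_def by (intro borel_measurable_continuous_onI continuous_intros)

definition seg where
  "seg c a b r = cinv c ((1 - lam r) *\<^sub>R fst (coord c a) + lam r *\<^sub>R fst (coord c b), snd (coord c a))"

definition mv where "mv c q x = cinv c (q, snd (coord c x))"

lemma seg_meas:
  assumes c: "goodc M Top c" and f: "f \<in> measurable N M" and g: "g \<in> measurable N M"
    and rho: "rho \<in> borel_measurable N"
  shows "(\<lambda>w. seg c (f w) (g w) (rho w)) \<in> measurable N M"
proof -
  have cf: "(\<lambda>w. coord c (f w)) \<in> measurable N (model_measure (cB c) (cT c))"
    using measurable_comp[OF f coord_meas[OF c]] by (simp add: comp_def)
  have cg: "(\<lambda>w. coord c (g w)) \<in> measurable N (model_measure (cB c) (cT c))"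
    using measurable_comp[OF g coord_meas[OF c]] by (simp add: comp_def)
  have f1: "(\<lambda>w. fst (coord c (f w))) \<in> borel_measurable N"
    using measurable_comp[OF cf[unfolded model_measure_def] measurable_fst] unfolding model_measure_def
    by (simp add: comp_def measurable_restrict_space2_iff)
  have g1: "(\<lambda>w. fst (coord c (g w))) \<in> borel_measurable N"
    using measurable_comp[OF cg[unfolded model_measure_def] measurable_fst] unfolding model_measure_def
    by (simp add: comp_def measurable_restrict_space2_iff)
  have f2: "(\<lambda>w. snd (coord c (f w))) \<in> measurable N (cT c)"
    using measurable_comp[OF cf[unfolded model_measure_def] measurable_snd] unfolding model_measure_def
    by (simp add: comp_def)
  have lr: "(\<lambda>w. lam (rho w)) \<in> borel_measurable N"
    using measurable_comp[OF rho lam_meas] by (simp add: comp_def)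
  have p1: "(\<lambda>w. (1 - lam (rho w)) *\<^sub>R fst (coord c (f w)) + lam (rho w) *\<^sub>R fst (coord c (g w)))
      \<in> borel_measurable N"
    using f1 g1 lr by (intro borel_measurable_add borel_measurable_scaleR borel_measurable_diff borel_measurable_const)
  have inB: "(1 - lam (rho w)) *\<^sub>R fst (coord c (f w)) + lam (rho w) *\<^sub>R fst (coord c (g w)) \<in> cB c" for w
    using goodc_convex[OF c] coord_in[OF c, of "f w"] coord_in[OF c, of "g w"] lam_01[of "rho w"]
    by (intro convexD) auto
  have p1': "(\<lambda>w. (1 - lam (rho w)) *\<^sub>R fst (coord c (f w)) + lam (rho w) *\<^sub>R fst (coord c (g w)))
      \<in> measurable N (restrict_space borel (cB c))"
    using p1 inB by (auto intro: measurable_restrict_space2)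
  have pt: "(\<lambda>w. ((1 - lam (rho w)) *\<^sub>R fst (coord c (f w)) + lam (rho w) *\<^sub>R fst (coord c (g w)),
        snd (coord c (f w)))) \<in> measurable N (model_measure (cB c) (cT c))"
    unfolding model_measure_def using p1' f2 by (rule measurable_Pair)
  show ?thesis unfolding seg_def using measurable_comp[OF pt cinv_meas[OF c]] by (simp add: comp_def)
qed

lemma mv_meas:
  assumes c: "goodc M Top c" and f: "f \<in> measurable N M" and q: "q \<in> cB c"
  shows "(\<lambda>w. mv c q (f w)) \<in> measurable N M"
proof -
  have cf: "(\<lambda>w. coord c (f w)) \<in> measurable N (model_measure (cB c) (cT c))"
    using measurable_comp[OF f coord_meas[OF c]] by (simp add: comp_def)
  have f2: "(\<lambda>w. snd (coord c (f w))) \<in> measurable N (cT c)"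
    using measurable_comp[OF cf[unfolded model_measure_def] measurable_snd] unfolding model_measure_def
    by (simp add: comp_def)
  have pt: "(\<lambda>w. (q, snd (coord c (f w)))) \<in> measurable N (model_measure (cB c) (cT c))"
    unfolding model_measure_def using q f2
    by (intro measurable_Pair measurable_const) (auto simp: space_restrict_space)
  show ?thesis unfolding mv_def using measurable_comp[OF pt cinv_meas[OF c]] by (simp add: comp_def)
qed


lemma topspace_model: "topspace (model_topology B T) = B \<times> space T"
  unfolding model_topology_def by simp

lemma goodc_openU: "goodc M Top c \<Longrightarrow> openin Top (cU c)"
  using goodc_fol[unfolded fol_chart_def] by blast

lemma goodc_homeo: "goodc M Top c \<Longrightarrow> homeomorphic_map (subtopology Top (cU c)) (model_topology (cB c) (cT c)) (cphi c)"
  using goodc_fol[unfolded fol_chart_def] by blast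

lemma goodc_openB: assumes "goodc M Top c" shows "open (cB c)"
  using goodc_fol[OF assms, unfolded fol_chart_def] by auto

lemma goodc_Usub: "goodc M Top c \<Longrightarrow> cU c \<subseteq> topspace Top"
  using goodc_openU openin_subset by blast

lemma topspace_subU: assumes "goodc M Top c" shows "topspace (subtopology Top (cU c)) = cU c"
  using goodc_Usub[OF assms] by (auto simp: topspace_subtopology)

lemma cinv_cont: assumes c: "goodc M Top c"
  shows "continuous_map (model_topology (cB c) (cT c)) Top (cinv c)"
proof -
  obtain g where g: "homeomorphic_maps (subtopology Top (cU c)) (model_topology (cB c) (cT c)) (cphi c) g"
    using goodc_homeo[OF c] homeomorphic_map_maps by blast
  have gc: "continuous_map (model_topology (cB c) (cT c)) (subtopology Top (cU c)) g"
    using g unfolding homeomorphic_maps_def by blast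
  have eq: "g p = cinv c p" if p: "p \<in> topspace (model_topology (cB c) (cT c))" for p
  proof -
    have gu: "g p \<in> cU c" using continuous_map_image_subset_topspace[OF gc] p topspace_subU[OF c] by auto
    have "cphi c (g p) = p" using g p unfolding homeomorphic_maps_def by blast
    then show ?thesis using cinv_phi[OF c gu] by simp
  qed
  show ?thesis using continuous_map_eq[OF continuous_map_into_fulltopology[OF gc] eq] by blast
qed

lemma phi_cont: "goodc M Top c \<Longrightarrow> continuous_map (subtopology Top (cU c)) (model_topology (cB c) (cT c)) (cphi c)"
  using goodc_homeo homeomorphic_imp_continuous_map by blast

lemma plaque_open: assumes c: "goodc M Top c"
  shows "openin Top {y \<in> cU c. snd (cphi c y) = tau}"
proof -
  have o: "openin (model_topology (cB c) (cT c)) (cB c \<times> ({tau} \<inter> space (cT c)))"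
    unfolding model_topology_def by (auto simp: openin_prod_Times_iff)
  have "openin (subtopology Top (cU c)) {x \<in> topspace (subtopology Top (cU c)). cphi c x \<in> cB c \<times> ({tau} \<inter> space (cT c))}"
    by (rule openin_continuous_map_preimage[OF phi_cont[OF c] o])
  moreover have "{x \<in> topspace (subtopology Top (cU c)). cphi c x \<in> cB c \<times> ({tau} \<inter> space (cT c))}
      = {y \<in> cU c. snd (cphi c y) = tau}"
    using topspace_subU[OF c] goodc_phi_in[OF c] by (auto simp: mem_Times_iff)
  ultimately show ?thesis using openin_trans_full goodc_openU[OF c] by metis
qed

lemma lam_cont: "continuous_on UNIV lam"
  unfolding lam_def by (intro continuous_intros)

lemma seg_cont:
  assumes c: "goodc M Top c" and a: "a \<in> cU c" and b: "b \<in> cU c"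
    and ab: "snd (cphi c a) = snd (cphi c b)"
  shows "continuous_map euclideanreal Top (seg c a b)"
proof -
  define A where "A = fst (cphi c a)"
  define Bv where "Bv = fst (cphi c b)"
  define tau where "tau = snd (cphi c a)"
  have A: "A \<in> cB c" "tau \<in> space (cT c)" using goodc_phi_in[OF c a] unfolding A_def tau_def by auto
  have Bv: "Bv \<in> cB c" using goodc_phi_in[OF c b] unfolding Bv_def by auto
  define pt where "pt = (\<lambda>r. ((1 - lam r) *\<^sub>R A + lam r *\<^sub>R Bv, tau))"
  have inB: "(1 - lam r) *\<^sub>R A + lam r *\<^sub>R Bv \<in> cB c" for r
    using goodc_convex[OF c] A Bv lam_01[of r] by (intro convexD) auto
  have c1: "continuous_on UNIV (\<lambda>r. (1 - lam r) *\<^sub>R A + lam r *\<^sub>R Bv)"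
    using lam_cont by (intro continuous_intros) (auto intro: continuous_on_subset)
  have ptc: "continuous_map euclideanreal (model_topology (cB c) (cT c)) pt"
    unfolding model_topology_def continuous_map_pairwise pt_def
    using c1 inB A by (auto simp: comp_def continuous_map_in_subtopology)
  have "continuous_map euclideanreal Top (cinv c \<circ> pt)"
    by (rule continuous_map_compose[OF ptc cinv_cont[OF c]])
  moreover have "cinv c \<circ> pt = seg c a b"
    unfolding seg_def pt_def A_def Bv_def tau_def using a b ab by (auto simp: coord_eq)
  ultimately show ?thesis by simp
qed

lemma dense_step:
  assumes c: "goodc M Top c" and x: "x \<in> cU c" and Ob: "openin Top Ob"
    and z: "z \<in> Ob" "z \<in> cU c" "snd (cphi c z) = snd (cphi c x)"
    and D: "\<And>X. open X \<Longrightarrow> X \<noteq> {} \<Longrightarrow> \<exists>d\<in>D. d \<in> X"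
  shows "\<exists>q\<in>D. q \<in> cB c \<and> cinv c (q, snd (cphi c x)) \<in> Ob"
proof -
  define tau where "tau = snd (cphi c x)"
  have tau: "tau \<in> space (cT c)" using goodc_phi_in[OF c x] unfolding tau_def by auto
  have pc: "continuous_map (top_of_set (cB c)) (model_topology (cB c) (cT c)) (\<lambda>e. (e, tau))"
    unfolding model_topology_def continuous_map_pairwise using tau
    by (auto simp: comp_def continuous_map_in_subtopology)
  have Fc: "continuous_map (top_of_set (cB c)) Top (\<lambda>e. cinv c (e, tau))"
    using continuous_map_compose[OF pc cinv_cont[OF c]] by (simp add: comp_def)
  have "openin (top_of_set (cB c)) {e \<in> topspace (top_of_set (cB c)). cinv c (e, tau) \<in> Ob}"
    by (rule openin_continuous_map_preimage[OF Fc Ob])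
  then have op: "open {e \<in> cB c. cinv c (e, tau) \<in> Ob}"
    using goodc_openB[OF c] openin_open_trans by fastforce
  have zz: "cphi c z = (fst (cphi c z), tau)" using z unfolding tau_def by (metis prod.collapse)
  have "fst (cphi c z) \<in> {e \<in> cB c. cinv c (e, tau) \<in> Ob}"
    using goodc_phi_in[OF c z(2)] cinv_phi[OF c z(2)] zz z(1) by (auto simp: mem_Times_iff)
  then obtain q where "q \<in> D" "q \<in> {e \<in> cB c. cinv c (e, tau) \<in> Ob}" using D[OF op] by blast
  then show ?thesis unfolding tau_def by auto
qed



lemma standard_borel_sep:
  assumes "standard_borel T"
  shows "\<exists>F. countable F \<and> F \<subseteq> sets T \<and>
     (\<forall>x\<in>space T. \<forall>y\<in>space T. x \<noteq> y \<longrightarrow> (\<exists>E\<in>F. x \<in> E \<and> y \<notin> E))"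
proof -
  obtain tau where tau: "topspace tau = space T" "completely_metrizable_space tau"
      "separable_space tau" "sets T = sigma_sets (space T) {U. openin tau U}"
    using assms unfolding standard_borel_def by blast
  obtain Mm d where md: "Metric_space Mm d" "tau = Metric_space.mtopology Mm d"
    using tau(2) unfolding completely_metrizable_space_def by blast
  interpret Metric_space Mm d by (rule md(1))
  obtain C where C: "countable C" "C \<subseteq> topspace tau" "tau closure_of C = topspace tau"
    using tau(3) unfolding separable_space_def by blast
  have MmT: "Mm = space T" using tau(1) md(2) by simp
  define F where "F = (\<lambda>(c,r). mball c r) ` (C \<times> (\<rat> \<inter> {0<..}))"
  have "countable F" unfolding F_def using C(1) countable_rat
    by (intro countable_image countable_SIGMA) (auto intro: countable_subset[of _ \<rat>])
  moreover have "F \<subseteq> sets T"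
  proof
    fix E assume "E \<in> F"
    then obtain c r where E: "E = mball c r" unfolding F_def by auto
    have "openin tau E" unfolding E md(2) by simp
    then show "E \<in> sets T" unfolding tau(4) by (auto intro: sigma_sets.Basic)
  qed
  moreover have "\<exists>E\<in>F. x \<in> E \<and> y \<notin> E" if xy: "x \<in> space T" "y \<in> space T" "x \<noteq> y" for x y
  proof -
    have x: "x \<in> Mm" and y: "y \<in> Mm" using xy MmT by auto
    define del where "del = d x y"
    have dp: "del > 0" unfolding del_def using x y xy(3) by simp
    have "x \<in> mtopology closure_of C" using C(3) x md(2) by simp
    then have cl: "\<forall>r>0. \<exists>y\<in>C. y \<in> mball x r" unfolding metric_closure_of by blast
    have d3: "del/3 > 0" using dp by simp
    obtain c where c: "c \<in> C" "c \<in> mball x (del/3)" using cl d3 by blast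
    obtain r where r: "r \<in> \<rat>" "del/3 < r" "r < 2*del/3"
      using Rats_dense_in_real[of "del/3" "2*del/3"] dp by auto
    have cM: "c \<in> Mm" and dxc: "d x c < del/3" using c by auto
    have "x \<in> mball c r" using cM x dxc r commute[of x c] by simp
    moreover have "y \<notin> mball c r"
    proof
      assume "y \<in> mball c r"
      then have "d c y < r" by simp
      moreover have "d x y \<le> d x c + d c y" using triangle[OF x cM y] .
      ultimately show False using dxc r del_def by linarith
    qed
    moreover have "mball c r \<in> F" unfolding F_def using c(1) r dp by (intro image_eqI[where x="(c,r)"]) auto
    ultimately show ?thesis by blast
  qed
  ultimately show ?thesis by blast
qed

lemma eq_set_meas:
  assumes T: "standard_borel T" and u: "u \<in> measurable N T" and v: "v \<in> measurable N T"
  shows "{w \<in> space N. u w = v w} \<in> sets N"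
proof -
  obtain F where Fc: "countable F \<and> F \<subseteq> sets T \<and>
    (\<forall>x\<in>space T. \<forall>y\<in>space T. x \<noteq> y \<longrightarrow> (\<exists>E\<in>F. x \<in> E \<and> y \<notin> E))"
    using standard_borel_sep[OF T] by (rule exE)
  note F = conjunct1[OF Fc] conjunct1[OF conjunct2[OF Fc]] conjunct2[OF conjunct2[OF Fc]]
  have eq: "{w \<in> space N. u w = v w} = space N - (\<Union>E\<in>F. {w\<in>space N. \<not> (u w \<in> E \<longleftrightarrow> v w \<in> E)})"
  proof (intro set_eqI iffI)
    fix w assume "w \<in> space N - (\<Union>E\<in>F. {w\<in>space N. \<not> (u w \<in> E \<longleftrightarrow> v w \<in> E)})"
    then have w: "w \<in> space N" "\<forall>E\<in>F. (u w \<in> E \<longleftrightarrow> v w \<in> E)" by auto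
    have uw: "u w \<in> space T" using measurable_space[OF u w(1)] .
    have vw: "v w \<in> space T" using measurable_space[OF v w(1)] .
    have "u w = v w"
    proof (rule ccontr)
      assume "u w \<noteq> v w"
      then obtain E where "E \<in> F" "u w \<in> E" "v w \<notin> E" using F(3) uw vw by blast
      then show False using w(2) by blast
    qed
    then show "w \<in> {w \<in> space N. u w = v w}" using w(1) by simp
  next
    fix w assume "w \<in> {w \<in> space N. u w = v w}"
    then show "w \<in> space N - (\<Union>E\<in>F. {w\<in>space N. \<not> (u w \<in> E \<longleftrightarrow> v w \<in> E)})" by simp
  qed
  have s: "{w\<in>space N. \<not> (u w \<in> E \<longleftrightarrow> v w \<in> E)} \<in> sets N" if "E \<in> F" for E
  proof -
    have E: "E \<in> sets T" using that F(2) by blast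
    have a1: "u -` E \<inter> space N \<in> sets N" using measurable_sets[OF u E] .
    have a2: "v -` E \<inter> space N \<in> sets N" using measurable_sets[OF v E] .
    have eq2: "{w\<in>space N. \<not> (u w \<in> E \<longleftrightarrow> v w \<in> E)} =
        ((u -` E \<inter> space N) - (v -` E \<inter> space N)) \<union> ((v -` E \<inter> space N) - (u -` E \<inter> space N))"
      by blast
    show ?thesis unfolding eq2 by (intro sets.Un sets.Diff a1 a2)
  qed
  have U: "(\<Union>E\<in>F. {w\<in>space N. \<not> (u w \<in> E \<longleftrightarrow> v w \<in> E)}) \<in> sets N"
    by (rule sets.countable_UN''[OF F(1) s])
  show ?thesis unfolding eq by (rule sets.Diff[OF sets.top U])
qed



lemma mv_props:
  assumes c: "goodc M Top c" and q: "q \<in> cB c" and x: "x \<in> cU c"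
  shows "mv c q x \<in> cU c" "snd (cphi c (mv c q x)) = snd (cphi c x)"
proof -
  have "(q, snd (cphi c x)) \<in> cB c \<times> space (cT c)" using q goodc_phi_in[OF c x] by auto
  then show "mv c q x \<in> cU c" "snd (cphi c (mv c q x)) = snd (cphi c x)"
    using cinv_in[OF c] unfolding mv_def coord_eq[OF x] by auto
qed

lemma lam0: "lam 0 = 0" and lam1: "lam 1 = 1" unfolding lam_def by auto

lemma seg0: assumes c: "goodc M Top c" and a: "a \<in> cU c" shows "seg c a b 0 = a"
  unfolding seg_def lam0 using cinv_phi[OF c a] coord_eq[OF a] by simp

lemma seg1: assumes c: "goodc M Top c" and a: "a \<in> cU c" and b: "b \<in> cU c"
  and ab: "snd (cphi c a) = snd (cphi c b)" shows "seg c a b 1 = b"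
  unfolding seg_def lam1 using cinv_phi[OF c b] coord_eq[OF a] coord_eq[OF b] ab by simp

fun pth :: "'a \<Rightarrow> (('a, 'e::euclidean_space, 'b) chart \<times> 'e) list \<Rightarrow> ('a, 'e, 'b) chart \<Rightarrow> 'a \<Rightarrow> real \<Rightarrow> 'a" where
  "pth x [] cf y r = seg cf x y r"
| "pth x (cq # st) cf y r = (if r \<le> 1 then seg (fst cq) x (mv (fst cq) (snd cq) x) r
        else pth (mv (fst cq) (snd cq) x) st cf y (r - 1))"

fun okc :: "'a \<Rightarrow> (('a, 'e::euclidean_space, 'b) chart \<times> 'e) list \<Rightarrow> ('a, 'e, 'b) chart \<Rightarrow> 'a \<Rightarrow> bool" where
  "okc x [] cf y = (x \<in> cU cf \<and> y \<in> cU cf \<and> snd (cphi cf x) = snd (cphi cf y))"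
| "okc x (cq # st) cf y = (x \<in> cU (fst cq) \<and> snd cq \<in> cB (fst cq) \<and> okc (mv (fst cq) (snd cq) x) st cf y)"

lemma pth0:
  assumes "okc x st cf y" "goodc M Top cf" "\<forall>p\<in>set st. goodc M Top (fst p)"
  shows "pth x st cf y 0 = x"
  using assms by (cases st) (auto intro: seg0)

lemma pthL:
  assumes "okc x st cf y" "goodc M Top cf" "\<forall>p\<in>set st. goodc M Top (fst p)"
  shows "pth x st cf y (real (length st) + 1) = y"
  using assms
proof (induction st arbitrary: x)
  case Nil
  then show ?case using seg1[of M Top cf x y] by simp
next
  case (Cons cq st)
  then have "pth (mv (fst cq) (snd cq) x) st cf y (real (length st) + 1) = y" by simp
  then show ?case by (simp add: add.commute)
qed

lemma pth_cont:
  assumes "okc x st cf y" "goodc M Top cf" "\<forall>p\<in>set st. goodc M Top (fst p)"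
  shows "continuous_map euclideanreal Top (pth x st cf y)"
  using assms
proof (induction st arbitrary: x)
  case Nil
  then show ?case using seg_cont[of M Top cf x y] by (simp add: fun_eq_iff)
next
  case (Cons cq st)
  define c where "c = fst cq"
  define q where "q = snd cq"
  have c: "goodc M Top c" using Cons.prems unfolding c_def by simp
  have x: "x \<in> cU c" and q: "q \<in> cB c" and ok: "okc (mv c q x) st cf y"
    using Cons.prems unfolding c_def q_def by auto
  have m: "mv c q x \<in> cU c" "snd (cphi c (mv c q x)) = snd (cphi c x)" using mv_props[OF c q x] by auto
  have IH: "continuous_map euclideanreal Top (pth (mv c q x) st cf y)"
    using Cons.IH[OF ok] Cons.prems by simp
  have s: "continuous_map euclideanreal Top (seg c x (mv c q x))"
    using seg_cont[OF c x m(1)] m(2) by simp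
  have s2: "continuous_map euclideanreal Top (\<lambda>r. pth (mv c q x) st cf y (r - 1))"
  proof -
    have "continuous_map euclideanreal euclideanreal (\<lambda>r::real. r - 1)"
      by (intro continuous_intros)
    from continuous_map_compose[OF this IH] show ?thesis unfolding comp_def .
  qed
  have "continuous_map euclideanreal Top
      (\<lambda>r. if (\<lambda>r. r) r \<le> (\<lambda>r. 1) r then seg c x (mv c q x) r else pth (mv c q x) st cf y (r - 1))"
  proof (rule continuous_map_cases_le)
    show "continuous_map euclideanreal euclideanreal (\<lambda>r::real. r)" by simp
    show "continuous_map euclideanreal euclideanreal (\<lambda>r::real. 1)" by simp
    show "continuous_map (subtopology euclideanreal {r \<in> topspace euclideanreal. r \<le> 1}) Top (seg c x (mv c q x))"
      using s by (rule continuous_map_from_subtopology)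
    show "continuous_map (subtopology euclideanreal {r \<in> topspace euclideanreal. 1 \<le> r}) Top
        (\<lambda>r. pth (mv c q x) st cf y (r - 1))"
      using s2 by (rule continuous_map_from_subtopology)
    fix r :: real assume "r = 1"
    then show "seg c x (mv c q x) r = pth (mv c q x) st cf y (r - 1)"
      using seg1[OF c x m(1) m(2)[symmetric]] pth0[OF ok] Cons.prems by simp
  qed
  then show ?case unfolding c_def q_def by simp
qed

lemma pth_meas:
  assumes "goodc M Top cf" "\<forall>p\<in>set st. goodc M Top (fst p) \<and> snd p \<in> cB (fst p)"
    and f: "f \<in> measurable N M" and g: "g \<in> measurable N M" and rho: "rho \<in> borel_measurable N"
  shows "(\<lambda>w. pth (f w) st cf (g w) (rho w)) \<in> measurable N M"
  using assms
proof (induction st arbitrary: f rho)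
  case Nil
  then show ?case using seg_meas[of M Top cf f N g rho] by simp
next
  case (Cons cq st)
  define c where "c = fst cq"
  define q where "q = snd cq"
  have c: "goodc M Top c" and q: "q \<in> cB c" using Cons.prems unfolding c_def q_def by auto
  have mvm: "(\<lambda>w. mv c q (f w)) \<in> measurable N M" using mv_meas[OF c Cons.prems(3) q] .
  have r1: "(\<lambda>w. rho w - 1) \<in> borel_measurable N" using Cons.prems(5) by measurable
  have A: "(\<lambda>w. seg c (f w) (mv c q (f w)) (rho w)) \<in> measurable N M"
    using seg_meas[OF c Cons.prems(3) mvm Cons.prems(5)] .
  have B: "(\<lambda>w. pth (mv c q (f w)) st cf (g w) (rho w - 1)) \<in> measurable N M"
    using Cons.IH[OF Cons.prems(1) _ mvm Cons.prems(4) r1] Cons.prems(2) by simp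
  have S: "{w \<in> space N. rho w \<le> 1} \<in> sets N" using Cons.prems(5) by measurable
  show ?case using measurable_If[OF A B S] unfolding c_def q_def by simp
qed

lemma okc_meas:
  assumes "goodc M Top cf" "\<forall>p\<in>set st. goodc M Top (fst p) \<and> snd p \<in> cB (fst p)"
    and f: "f \<in> measurable N M" and g: "g \<in> measurable N M"
  shows "{w \<in> space N. okc (f w) st cf (g w)} \<in> sets N"
  using assms
proof (induction st arbitrary: f)
  case Nil
  have cf: "goodc M Top cf" by fact
  have U: "cU cf \<in> sets M" using goodc_U_sets[OF cf] .
  have s1: "f -` cU cf \<inter> space N \<in> sets N" using measurable_sets[OF Nil.prems(3) U] .
  have s2: "g -` cU cf \<inter> space N \<in> sets N" using measurable_sets[OF Nil.prems(4) U] .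
  have cfm: "(\<lambda>w. coord cf (f w)) \<in> measurable N (model_measure (cB cf) (cT cf))"
    using measurable_comp[OF Nil.prems(3) coord_meas[OF cf]] by (simp add: comp_def)
  have cgm: "(\<lambda>w. coord cf (g w)) \<in> measurable N (model_measure (cB cf) (cT cf))"
    using measurable_comp[OF Nil.prems(4) coord_meas[OF cf]] by (simp add: comp_def)
  have u: "(\<lambda>w. snd (coord cf (f w))) \<in> measurable N (cT cf)"
    using measurable_comp[OF cfm[unfolded model_measure_def] measurable_snd] by (simp add: comp_def)
  have v: "(\<lambda>w. snd (coord cf (g w))) \<in> measurable N (cT cf)"
    using measurable_comp[OF cgm[unfolded model_measure_def] measurable_snd] by (simp add: comp_def)
  have sb: "standard_borel (cT cf)" using goodc_fol[OF cf, unfolded fol_chart_def] by blast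
  have s3: "{w \<in> space N. snd (coord cf (f w)) = snd (coord cf (g w))} \<in> sets N"
    by (rule eq_set_meas[OF sb u v])
  have eq: "{w \<in> space N. okc (f w) [] cf (g w)} =
     (f -` cU cf \<inter> space N) \<inter> (g -` cU cf \<inter> space N) \<inter> {w \<in> space N. snd (coord cf (f w)) = snd (coord cf (g w))}"
    by (auto simp: coord_eq)
  show ?case unfolding eq by (intro sets.Int s1 s2 s3)
next
  case (Cons cq st)
  define c where "c = fst cq"
  define q where "q = snd cq"
  have c: "goodc M Top c" and q: "q \<in> cB c" using Cons.prems unfolding c_def q_def by auto
  have mvm: "(\<lambda>w. mv c q (f w)) \<in> measurable N M" using mv_meas[OF c Cons.prems(3) q] .
  have IH: "{w \<in> space N. okc (mv c q (f w)) st cf (g w)} \<in> sets N"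
    using Cons.IH[OF Cons.prems(1) _ mvm Cons.prems(4)] Cons.prems(2) by simp
  have s1: "f -` cU c \<inter> space N \<in> sets N" using measurable_sets[OF Cons.prems(3) goodc_U_sets[OF c]] .
  have eq: "{w \<in> space N. okc (f w) (cq # st) cf (g w)} =
     (f -` cU c \<inter> space N) \<inter> {w \<in> space N. okc (mv c q (f w)) st cf (g w)}"
    using q unfolding c_def q_def by auto
  show ?case unfolding eq by (intro sets.Int s1 IH)
qed



fun pre :: "'a \<Rightarrow> (('a, 'e::euclidean_space, 'b) chart \<times> 'e) list \<Rightarrow> bool" where
  "pre x [] = True"
| "pre x (cq # st) = (x \<in> cU (fst cq) \<and> snd cq \<in> cB (fst cq) \<and> pre (mv (fst cq) (snd cq) x) st)"

fun endp :: "'a \<Rightarrow> (('a, 'e::euclidean_space, 'b) chart \<times> 'e) list \<Rightarrow> 'a" where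
  "endp x [] = x"
| "endp x (cq # st) = endp (mv (fst cq) (snd cq) x) st"

lemma okc_append: "okc x (st @ st2) cf y \<longleftrightarrow> pre x st \<and> okc (endp x st) st2 cf y"
  by (induction st arbitrary: x) auto

lemma okc_split: "okc x st cf y \<longleftrightarrow> pre x st \<and> okc (endp x st) [] cf y"
  using okc_append[of x st "[]" cf y] by simp

lemma okc_end:
  assumes "okc x st cf y" "y' \<in> cU cf" "snd (cphi cf y') = snd (cphi cf y)"
  shows "okc x st cf y'"
  using assms okc_split[of x st cf y] okc_split[of x st cf y'] by auto

lemma reach:
  assumes A1: "\<And>c. c \<in> A1 \<Longrightarrow> goodc M Top c"
    and cov: "topspace Top \<subseteq> (\<Union>c\<in>A1. cU c)"
    and D: "\<And>X. open X \<Longrightarrow> X \<noteq> {} \<Longrightarrow> \<exists>d\<in>D. d \<in> X"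
    and t: "t \<in> topspace Top"
    and Stp: "Stp = {p. fst p \<in> A1 \<and> snd p \<in> D \<and> snd p \<in> cB (fst p)}"
  shows "connected_component_of_set Top t \<subseteq> {y. \<exists>st cf. set st \<subseteq> Stp \<and> cf \<in> A1 \<and> okc t st cf y}"
proof -
  define R where "R = {y. \<exists>st cf. set st \<subseteq> Stp \<and> cf \<in> A1 \<and> okc t st cf y}"
  have Rsub: "R \<subseteq> topspace Top"
  proof
    fix y assume "y \<in> R"
    then obtain st cf where "cf \<in> A1" "okc t st cf y" unfolding R_def by blast
    then have "y \<in> cU cf" "goodc M Top cf" using okc_split[of t st cf y] A1 by auto
    then show "y \<in> topspace Top" using goodc_Usub by blast
  qed
  have Ropen: "openin Top R"
  proof (subst openin_subopen, intro ballI)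
    fix y assume "y \<in> R"
    then obtain st cf where st: "set st \<subseteq> Stp" "cf \<in> A1" "okc t st cf y" unfolding R_def by blast
    have cf: "goodc M Top cf" using A1 st(2) by blast
    have yU: "y \<in> cU cf" using st(3) okc_split[of t st cf y] by auto
    define V where "V = {z \<in> cU cf. snd (cphi cf z) = snd (cphi cf y)}"
    have "openin Top V" unfolding V_def by (rule plaque_open[OF cf])
    moreover have "y \<in> V" unfolding V_def using yU by simp
    moreover have "V \<subseteq> R"
    proof
      fix z assume "z \<in> V"
      then have "okc t st cf z" using okc_end[OF st(3)] unfolding V_def by blast
      then show "z \<in> R" unfolding R_def using st by blast
    qed
    ultimately show "\<exists>V. openin Top V \<and> y \<in> V \<and> V \<subseteq> R" by blast
  qed
  have Copen: "openin Top (topspace Top - R)"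
  proof (subst openin_subopen, intro ballI)
    fix y assume y: "y \<in> topspace Top - R"
    then obtain c' where c': "c' \<in> A1" "y \<in> cU c'" using cov by blast
    have gc': "goodc M Top c'" using A1 c'(1) by blast
    define V where "V = {z \<in> cU c'. snd (cphi c' z) = snd (cphi c' y)}"
    have Vo: "openin Top V" unfolding V_def by (rule plaque_open[OF gc'])
    have "V \<inter> R = {}"
    proof (rule ccontr)
      assume "V \<inter> R \<noteq> {}"
      then obtain z where z: "z \<in> V" "z \<in> R" by blast
      then obtain st cf where st: "set st \<subseteq> Stp" "cf \<in> A1" "okc t st cf z" unfolding R_def by blast
      have cf: "goodc M Top cf" using A1 st(2) by blast
      define xk where "xk = endp t st"
      have pr: "pre t st" and xk: "xk \<in> cU cf" "z \<in> cU cf" "snd (cphi cf xk) = snd (cphi cf z)"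
        using st(3) okc_split[of t st cf z] unfolding xk_def by auto
      obtain q where q: "q \<in> D" "q \<in> cB cf" "cinv cf (q, snd (cphi cf xk)) \<in> V"
        using dense_step[OF cf xk(1) Vo z(1) xk(2) xk(3)[symmetric] D] by blast
      have mvq: "mv cf q xk \<in> V" using q(3) unfolding mv_def coord_eq[OF xk(1)] .
      have "okc t (st @ [(cf, q)]) c' y"
        unfolding okc_append using pr xk(1) q(2) mvq c'(2) unfolding xk_def V_def by auto
      moreover have "set (st @ [(cf, q)]) \<subseteq> Stp" using st(1) st(2) q Stp by auto
      ultimately have "y \<in> R" unfolding R_def using c'(1) by blast
      then show False using y by blast
    qed
    moreover have "y \<in> V" unfolding V_def using c'(2) by simp
    moreover have "V \<subseteq> topspace Top" using Vo openin_subset by blast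
    ultimately show "\<exists>V. openin Top V \<and> y \<in> V \<and> V \<subseteq> topspace Top - R" using Vo by blast
  qed
  have tR: "t \<in> R"
  proof -
    obtain cf where "cf \<in> A1" "t \<in> cU cf" using cov t by blast
    then have "okc t [] cf t" by simp
    then have "set [] \<subseteq> Stp \<and> cf \<in> A1 \<and> okc t [] cf t" using \<open>cf \<in> A1\<close> by simp
    then show ?thesis unfolding R_def by blast
  qed
  have K: "connectedin Top (connected_component_of_set Top t)" by (rule connectedin_connected_component_of)
  have tK: "t \<in> connected_component_of_set Top t" using t by (simp add: connected_component_of_refl)
  have "connected_component_of_set Top t \<inter> (topspace Top - R) = {}"
  proof (rule ccontr)
    assume ne: "connected_component_of_set Top t \<inter> (topspace Top - R) \<noteq> {}"
    have sub: "connected_component_of_set Top t \<subseteq> R \<union> (topspace Top - R)"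
      using connected_component_of_subset_topspace[of Top t] by auto
    have "R \<inter> (topspace Top - R) \<inter> connected_component_of_set Top t = {}" by blast
    moreover have "R \<inter> connected_component_of_set Top t \<noteq> {}" using tR tK by blast
    ultimately show False using K[unfolded connectedin] Ropen Copen sub ne by blast
  qed
  then show ?thesis unfolding R_def[symmetric]
    using connected_component_of_subset_topspace[of Top t] by auto
qed



lemma disc_cont:
  assumes "\<And>t. t \<in> S \<Longrightarrow> continuous_map euclideanreal Top (\<lambda>s. H (t, s))"
  shows "continuous_map (prod_topology (discrete_topology S) euclideanreal) Top H"
  unfolding continuous_map_def
proof (intro conjI allI impI)
  show "H \<in> topspace (prod_topology (discrete_topology S) euclideanreal) \<rightarrow> topspace Top"
  proof
    fix w assume "w \<in> topspace (prod_topology (discrete_topology S) euclideanreal)"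
    then obtain t s where w: "w = (t, s)" "t \<in> S" by auto
    have "(\<lambda>s. H (t, s)) \<in> topspace euclideanreal \<rightarrow> topspace Top"
      using assms[OF w(2)] unfolding continuous_map_def by blast
    then show "H w \<in> topspace Top" using w by auto
  qed
next
  fix Ob assume Ob: "openin Top Ob"
  show "openin (prod_topology (discrete_topology S) euclideanreal)
      {x \<in> topspace (prod_topology (discrete_topology S) euclideanreal). H x \<in> Ob}"
    unfolding openin_prod_topology_alt
  proof (intro allI impI)
    fix t s assume ts: "(t, s) \<in> {x \<in> topspace (prod_topology (discrete_topology S) euclideanreal). H x \<in> Ob}"
    then have t: "t \<in> S" and h: "H (t, s) \<in> Ob" by auto
    define V where "V = {x \<in> topspace euclideanreal. H (t, x) \<in> Ob}"
    have "openin euclideanreal V" unfolding V_def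
      by (rule openin_continuous_map_preimage[OF assms[OF t] Ob])
    moreover have "{t} \<times> V \<subseteq> {x \<in> topspace (prod_topology (discrete_topology S) euclideanreal). H x \<in> Ob}"
      using t unfolding V_def by auto
    moreover have "openin (discrete_topology S) {t}" using t by simp
    ultimately show "\<exists>U V. openin (discrete_topology S) U \<and> openin euclideanreal V \<and> t \<in> U \<and> s \<in> V \<and>
        U \<times> V \<subseteq> {x \<in> topspace (prod_topology (discrete_topology S) euclideanreal). H x \<in> Ob}"
      using h unfolding V_def by (intro exI[of _ "{t}"] exI[of _ V]) (auto simp: V_def)
  qed
qed

theorem mainTheorem8:
  fixes M :: "'a measure" and Top :: "'a topology"
    and A :: "('a, 'e::euclidean_space, 'b) chart set"
    and S S' :: "'a set" and h :: "'a \<Rightarrow> 'a"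
  assumes "measurable_lamination M Top TYPE('e \<times> 'b)"
    and "regular_atlas M Top A"
    and "measurable_holonomy_map M Top S S' h"
  shows "\<exists>H. measurable_homotopy M Top S H \<and>
             (\<forall>t\<in>S. H (t, 0) = t \<and> H (t, 1) = h t)"
proof -
  have MT: "space M = topspace Top" using assms(1) unfolding measurable_lamination_def MT_space_def by blast
  obtain A0 :: "('a, 'e, 'b) chart set" where A0: "countable A0" "fol_atlas M Top A0"
    using assms(1) unfolding measurable_lamination_def by blast
  define A1 where "A1 = {c \<in> A0. cU c \<noteq> {}}"
  have A1g: "goodc M Top c" if "c \<in> A1" for c
    using that A0(2) unfolding A1_def fol_atlas_def goodc_def by blast
  have cov: "topspace Top \<subseteq> (\<Union>c\<in>A1. cU c)"
  proof
    fix x assume "x \<in> topspace Top"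
    then have "x \<in> (\<Union>c\<in>A0. fst c)" using A0(2) MT unfolding fol_atlas_def by blast
    then obtain c where "c \<in> A0" "x \<in> cU c" unfolding cU_def by blast
    then show "x \<in> (\<Union>c\<in>A1. cU c)" unfolding A1_def by blast
  qed
  have cA1: "countable A1" unfolding A1_def using A0(1) by (rule countable_subset[rotated]) auto
  obtain D :: "'e set" where cD: "countable D" and D: "\<And>X. open X \<Longrightarrow> X \<noteq> {} \<Longrightarrow> \<exists>d\<in>D. d \<in> X"
    by (rule countable_dense_setE) blast
  define Stp where "Stp = {p. fst p \<in> A1 \<and> snd p \<in> D \<and> snd p \<in> cB (fst p)}"
  have cStp: "countable Stp"
  proof (rule countable_subset)
    show "Stp \<subseteq> A1 \<times> D" unfolding Stp_def by auto
    show "countable (A1 \<times> D)" using cA1 cD by (rule countable_SIGMA)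
  qed
  define Dat where "Dat = lists Stp \<times> A1"
  have cDat: "countable Dat" unfolding Dat_def using cStp cA1 by (intro countable_SIGMA countable_lists)
  have hol: "S \<in> sets M" "h \<in> measurable (restrict_space M S) (restrict_space M S')"
    "\<forall>t\<in>S. h t \<in> connected_component_of_set Top t"
    using assms(3) unfolding measurable_holonomy_map_def transversal_def by blast+
  have SM: "S \<subseteq> space M" using sets.sets_into_space[OF hol(1)] .
  define N where "N = restrict_space M S \<Otimes>\<^sub>M (borel :: real measure)"
  have fm: "fst \<in> measurable N M"
    using measurable_fst[of "restrict_space M S" "borel :: real measure"] unfolding N_def
    by (simp add: measurable_restrict_space2_iff)
  have hm: "(\<lambda>w. h (fst w)) \<in> measurable N M"
    using measurable_comp[OF measurable_fst[of "restrict_space M S" "borel :: real measure"] hol(2)] unfolding N_def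
    by (simp add: measurable_restrict_space2_iff comp_def)
  have sm: "snd \<in> borel_measurable N" unfolding N_def by (rule measurable_snd)
  show ?thesis
  proof (cases "S = {}")
    case True
    have "measurable_homotopy M Top S fst"
      unfolding measurable_homotopy_def N_def[symmetric] using fm True
      by (auto intro!: disc_cont)
    then show ?thesis using True by blast
  next
    case False
    then obtain t0 where t0: "t0 \<in> S" by blast
    then obtain c0 where "c0 \<in> A1" using cov SM MT by blast
    then have DatNE: "Dat \<noteq> {}" unfolding Dat_def by auto
    define e where "e = from_nat_into Dat"
    have eD: "e n \<in> Dat" for n unfolding e_def using DatNE by (rule from_nat_into)
    define V where "V n t = okc t (fst (e n)) (snd (e n)) (h t)" for n t
    have ex: "\<exists>n. V n t" if t: "t \<in> S" for t
    proof -
      have tT: "t \<in> topspace Top" using t SM MT by blast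
      have "h t \<in> {y. \<exists>st cf. set st \<subseteq> Stp \<and> cf \<in> A1 \<and> okc t st cf y}"
        using reach[OF A1g cov D tT Stp_def] hol(3) t by blast
      then obtain st cf where st: "set st \<subseteq> Stp" "cf \<in> A1" "okc t st cf (h t)" by blast
      have "(st, cf) \<in> Dat" unfolding Dat_def using st by auto
      then obtain n where en: "e n = (st, cf)" unfolding e_def using from_nat_into_surj[OF cDat] by blast
      have "V n t" unfolding V_def en using st(3) by simp
      then show ?thesis by blast
    qed
    define k where "k t = (LEAST n. V n t)" for t
    have Vk: "V (k t) t" if "t \<in> S" for t unfolding k_def using ex[OF that] by (rule LeastI_ex)
    have gd: "goodc M Top (snd (e n)) \<and> (\<forall>p\<in>set (fst (e n)). goodc M Top (fst p) \<and> snd p \<in> cB (fst p))" for n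
    proof -
      obtain st cf where en: "e n = (st, cf)" by (cases "e n") auto
      have st: "set st \<subseteq> Stp" "cf \<in> A1" using eD[of n] unfolding en Dat_def by (auto simp: in_lists_conv_set)
      have "goodc M Top cf" using A1g st(2) .
      moreover have "\<forall>p\<in>set st. goodc M Top (fst p) \<and> snd p \<in> cB (fst p)"
      proof
        fix p assume "p \<in> set st"
        then have "p \<in> Stp" using st(1) by blast
        then show "goodc M Top (fst p) \<and> snd p \<in> cB (fst p)" unfolding Stp_def using A1g by blast
      qed
      ultimately show ?thesis unfolding en by simp
    qed
    define L where "L n = real (length (fst (e n))) + 1" for n
    define Q where "Q n w = pth (fst w) (fst (e n)) (snd (e n)) (h (fst w)) (snd w * L n)" for n w
    define H where "H w = Q (k (fst w)) w" for w
    have Qm: "(\<lambda>w. Q n w) \<in> measurable N M" for n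
    proof -
      have r: "(\<lambda>w. snd w * L n) \<in> borel_measurable N" using sm by measurable
      show ?thesis unfolding Q_def using pth_meas[OF conjunct1[OF gd] conjunct2[OF gd] fm hm r] .
    qed
    have km: "(\<lambda>w. k (fst w)) \<in> measurable N (count_space UNIV)"
      unfolding k_def
    proof (rule measurable_Least)
      fix i
      have "{w \<in> space N. V i (fst w)} \<in> sets N"
        unfolding V_def using okc_meas[OF conjunct1[OF gd] conjunct2[OF gd] fm hm] .
      then show "(\<lambda>w. V i (fst w)) \<in> measurable N (count_space UNIV)"
        using pred_def by metis
    qed
    have Hm: "H \<in> measurable N M"
      unfolding H_def using measurable_compose_countable[OF Qm km] .
    have Hc: "continuous_map (prod_topology (discrete_topology S) euclideanreal) Top H"
    proof (rule disc_cont)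
      fix t assume t: "t \<in> S"
      have ok: "okc t (fst (e (k t))) (snd (e (k t))) (h t)" using Vk[OF t] unfolding V_def .
      have pc: "continuous_map euclideanreal Top (pth t (fst (e (k t))) (snd (e (k t))) (h t))"
        using pth_cont[OF ok] gd by blast
      have "continuous_map euclideanreal euclideanreal (\<lambda>s::real. s * L (k t))"
        by (intro continuous_intros)
      from continuous_map_compose[OF this pc]
      show "continuous_map euclideanreal Top (\<lambda>s. H (t, s))"
        unfolding H_def Q_def comp_def by simp
    qed
    have bd: "H (t, 0) = t \<and> H (t, 1) = h t" if t: "t \<in> S" for t
    proof -
      have ok: "okc t (fst (e (k t))) (snd (e (k t))) (h t)" using Vk[OF t] unfolding V_def .
      have g1: "goodc M Top (snd (e (k t)))" and g2: "\<forall>p\<in>set (fst (e (k t))). goodc M Top (fst p)"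
        using gd[of "k t"] by auto
      show ?thesis unfolding H_def Q_def L_def using pth0[OF ok g1 g2] pthL[OF ok g1 g2] by simp
    qed
    show ?thesis
      using Hm Hc bd unfolding measurable_homotopy_def N_def by blast
  qed
qed

end
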